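(* Let $Z=(X_1,\dots,X_M)$ be a random vector (full data), $[M]=\{X_1,\dots,X_M\}$, and let $R$ be a random variable taking values in a finite collection $Q$ of nonempty subsets of $[M]$ with $\pi_r=\mathbb{P}(R=r)$ for $r\in Q$. Assume (MCAR) $R$ is independent of $Z$, and (positivity) $[M]\in Q$ with $\pi_{[M]}>c>0$. For $s\subseteq[M]$ let $\lambda_s=\sum_{r\in Q,\ s\subseteq r}\pi_r$, and for $r\in Q$, $r\neq[M]$, define $$\omega_r=\sum_{s:\ r\subseteq s\subseteq[M]}(-1)^{|s|-|r|}\frac{\mathbb{I}(R\supseteq s)}{\lambda_s}.$$ Let $\psi^F:\mathcal{Z}\times\Omega\to\mathbb{R}^d$ and $\theta^\star\in\Omega$ satisfy $\mathbb{E}[\psi^F(Z,\theta^\star)]=\mathbf{0}_d$ with $\mathbb{E}[\psi^F(Z,\theta)^T\psi^F(Z,\theta)]<\infty$. For each $r\in Q$, $r\neq[M]$, let $\mathcal{F}_r$ be a fixed (non-random, e.g. pre-trained) measurable $\mathbb{R}^d$-valued function of $X_r$ with $\mathbb{E}\|\mathcal{F}_r(X_r)\|<\infty$, serving as a proxy either for $\mathbb{E}[\psi^F(Z,\theta^\star)\mid X_r]$ or for $\psi^F(\mathbb{E}[Z\mid X_r],\theta^\star)$. Then for every choice of real numbers $\alpha=\{\alpha_r: r\in Q, r\neq[M]\}$, the function $$\psi_\alpha(Z;\theta^\star)=\frac{\mathbb{I}(R=[M])}{\pi_{[M]}}\psi^F(Z,\theta^\star)+\sum_{r\in Q,\ r\neq[M]}\alpha_r\,\omega_r\,\mathcal{F}_r(X_r)$$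 satisfies $\mathbb{E}[\psi_\alpha(Z;\theta^\star)]=\mathbf{0}_d$, the expectation being over the joint distribution of $(Z,R)$.
   Context: $X_r$ denotes the sub-vector of $Z$ consisting of the modalities in $r$; $\mathbb{I}(\cdot)$ is the indicator function; $|s|$ is the cardinality of $s$. $\Omega\subset\mathbb{R}^d$ is the parameter space and $\mathcal{Z}$ the sample space of $Z$. *)

theory Defs
  imports "HOL-Probability.Probability"
begin

text \<open>Independence of two random variables with values in (possibly) different
  measurable spaces (the library's indep_var requires equal value types).\<close>
definition indep_rv :: "'a measure \<Rightarrow> 'b measure \<Rightarrow> ('a \<Rightarrow> 'b) \<Rightarrow> 'c measure \<Rightarrow> ('a \<Rightarrow> 'c) \<Rightarrow> bool" where
  "indep_rv M Ma A Mb B \<longleftrightarrow>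
     A \<in> measurable M Ma \<and> B \<in> measurable M Mb \<and>
     (\<forall>X\<in>sets Ma. \<forall>Y\<in>sets Mb.
        measure M (A -` X \<inter> B -` Y \<inter> space M) =
        measure M (A -` X \<inter> space M) * measure M (B -` Y \<inter> space M))"

definition pat_prob :: "'a measure \<Rightarrow> ('a \<Rightarrow> 'i set) \<Rightarrow> 'i set \<Rightarrow> real" where
  "pat_prob M R r = measure M {x \<in> space M. R x = r}"

definition lam :: "'a measure \<Rightarrow> ('a \<Rightarrow> 'i set) \<Rightarrow> 'i set set \<Rightarrow> 'i set \<Rightarrow> real" where
  "lam M R Q s = (\<Sum>r\<in>{r\<in>Q. s \<subseteq> r}. pat_prob M R r)"

definition omega :: "'a measure \<Rightarrow> ('a \<Rightarrow> 'i set) \<Rightarrow> 'i set set \<Rightarrow> 'i set \<Rightarrow> 'i set \<Rightarrow> 'a \<Rightarrow> real" where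
  "omega M R Q I r x = (\<Sum>s\<in>{s. r \<subseteq> s \<and> s \<subseteq> I}.
      (-1) ^ (card s - card r) * of_bool (s \<subseteq> R x) / lam M R Q s)"

end

theory Submission imports Defs begin

lemma indep_int:
  fixes g :: "('i \<Rightarrow> 'b) \<Rightarrow> 'c::{banach, second_countable_topology}"
  assumes P: "prob_space M" and Zm: "Z \<in> measurable M (PiM I N)"
    and Rm: "R \<in> measurable M (count_space UNIV)"
    and ind: "indep_rv M (count_space UNIV) R (PiM I N) Z"
    and gm: "g \<in> borel_measurable (PiM I N)"
  shows "(\<integral>x. of_bool (R x \<in> A) *\<^sub>R g (Z x) \<partial>M) = measure M {x\<in>space M. R x \<in> A} *\<^sub>R (\<integral>x. g (Z x) \<partial>M)"
proof -
  interpret prob_space M by fact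
  define E where "E = R -` A \<inter> space M"
  have E: "E \<in> sets M" unfolding E_def using Rm by (rule measurable_sets) simp
  define p where "p = measure M E"
  have p0: "p \<ge> 0" by (simp add: p_def)
  let ?D = "density M (\<lambda>x. ennreal (indicator E x))"
  have eq: "distr ?D (PiM I N) Z = density (distr M (PiM I N) Z) (\<lambda>_. ennreal p)"
  proof (rule measure_eqI)
    show "sets (distr ?D (PiM I N) Z) = sets (density (distr M (PiM I N) Z) (\<lambda>_. ennreal p))" by simp
    fix B assume "B \<in> sets (distr ?D (PiM I N) Z)"
    then have B: "B \<in> sets (PiM I N)" by simp
    have ZB: "Z -` B \<inter> space M \<in> sets M" using Zm B by (rule measurable_sets)
    have ZmD: "Z \<in> measurable ?D (PiM I N)" using Zm by (simp only: measurable_density_eq1)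
    have Em: "(\<lambda>x. ennreal (indicator E x)) \<in> borel_measurable M"
      using E by measurable
    have "emeasure (distr ?D (PiM I N) Z) B = emeasure ?D (Z -` B \<inter> space M)"
      using emeasure_distr[OF ZmD B] by (simp only: space_density)
    also have "\<dots> = (\<integral>\<^sup>+x. ennreal (indicator E x) * indicator (Z -` B \<inter> space M) x \<partial>M)"
      by (rule emeasure_density[OF Em ZB])
    also have "\<dots> = (\<integral>\<^sup>+x. indicator (E \<inter> (Z -` B \<inter> space M)) x \<partial>M)"
      by (intro nn_integral_cong) (auto split: split_indicator)
    also have "\<dots> = emeasure M (E \<inter> (Z -` B \<inter> space M))"
      by (rule nn_integral_indicator) (use ZB E in blast)
    also have "E \<inter> (Z -` B \<inter> space M) = R -` A \<inter> Z -` B \<inter> space M"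
      by (auto simp: E_def)
    also have "emeasure M (R -` A \<inter> Z -` B \<inter> space M) = ennreal (measure M (R -` A \<inter> Z -` B \<inter> space M))"
      by (rule emeasure_eq_measure)
    also have "measure M (R -` A \<inter> Z -` B \<inter> space M) = p * measure M (Z -` B \<inter> space M)"
    proof -
      have "\<forall>X\<in>sets (count_space UNIV). \<forall>Y\<in>sets (PiM I N).
        measure M (R -` X \<inter> Z -` Y \<inter> space M) =
        measure M (R -` X \<inter> space M) * measure M (Z -` Y \<inter> space M)"
        using ind unfolding indep_rv_def by blast
      moreover have "A \<in> sets (count_space UNIV)" by simp
      ultimately show ?thesis using B unfolding p_def E_def by blast
    qed
    also have "ennreal (p * measure M (Z -` B \<inter> space M)) = ennreal p * emeasure M (Z -` B \<inter> space M)"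
      using p0 by (simp only: ennreal_mult measure_nonneg emeasure_eq_measure)
    also have "emeasure M (Z -` B \<inter> space M) = emeasure (distr M (PiM I N) Z) B"
      by (rule emeasure_distr[OF Zm B, symmetric])
    also have "ennreal p * emeasure (distr M (PiM I N) Z) B = emeasure (density (distr M (PiM I N) Z) (\<lambda>_. ennreal p)) B"
      by (rule emeasure_density_const[symmetric]) (simp only: sets_distr B)
    finally show "emeasure (distr ?D (PiM I N) Z) B = emeasure (density (distr M (PiM I N) Z) (\<lambda>_. ennreal p)) B" .
  qed
  have gZ: "(\<lambda>x. g (Z x)) \<in> borel_measurable M" using gm Zm by simp
  have "(\<integral>x. of_bool (R x \<in> A) *\<^sub>R g (Z x) \<partial>M) = (\<integral>x. indicator E x *\<^sub>R g (Z x) \<partial>M)"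
    by (intro Bochner_Integration.integral_cong) (auto simp: E_def indicator_def)
  also have "\<dots> = integral\<^sup>L ?D (\<lambda>x. g (Z x))"
    using E gZ by (simp add: integral_density)
  also have "\<dots> = integral\<^sup>L (distr ?D (PiM I N) Z) g"
    using Zm gm by (simp add: integral_distr)
  also have "\<dots> = integral\<^sup>L (density (distr M (PiM I N) Z) (\<lambda>_. ennreal p)) g"
    by (simp add: eq)
  also have "\<dots> = p *\<^sub>R integral\<^sup>L (distr M (PiM I N) Z) g"
    using gm p0 by (subst integral_density) auto
  also have "\<dots> = p *\<^sub>R (\<integral>x. g (Z x) \<partial>M)"
    using Zm gm by (simp add: integral_distr)
  finally show ?thesis by (simp add: p_def E_def Collect_conj_eq Int_ac vimage_def)
qed

lemma neg1_sq: "(-1::real) ^ n * (-1) ^ n = 1"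
  by (induct n) auto

lemma alt_sum0:
  assumes "finite I" "r \<subset> I"
  shows "(\<Sum>s\<in>{s. r \<subseteq> s \<and> s \<subseteq> I}. (-1::real) ^ (card s - card r)) = 0"
proof -
  have fin: "finite {s. r \<subseteq> s \<and> s \<subseteq> I}" by (rule finite_subset[of _ "Pow I"]) (use assms(1) in auto)
  have "(\<Sum>s\<in>{s. r \<subseteq> s \<and> s \<subseteq> I}. (-1::real) ^ (card s - card r))
      = (\<Sum>s\<in>{s. r \<subseteq> s \<and> s \<subseteq> I}. (-1::real) ^ card r * (-1) ^ card s)"
  proof (rule sum.cong[OF refl])
    fix s assume "s \<in> {s. r \<subseteq> s \<and> s \<subseteq> I}"
    then have rs: "r \<subseteq> s" and sI: "s \<subseteq> I" by auto
    have "finite s" by (rule finite_subset[OF sI assms(1)])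
    then have "card r \<le> card s" using rs by (rule card_mono)
    then obtain k where k: "card s = card r + k" using le_iff_add by blast
    show "(-1::real) ^ (card s - card r) = (-1) ^ card r * (-1) ^ card s"
      by (simp only: k diff_add_inverse power_add mult.assoc[symmetric] neg1_sq mult_1_left)
  qed
  also have "\<dots> = (-1) ^ card r * (\<Sum>s\<in>{s. r \<subseteq> s \<and> s \<subseteq> I}. (-1::real) ^ card s)"
    by (simp add: sum_distrib_left)
  also have "(\<Sum>s\<in>{s. r \<subseteq> s \<and> s \<subseteq> I}. (-1::real) ^ card s) = 0"
  proof (rule sum_alternating_cancels[OF fin])
    have "card {T. T \<subseteq> I \<and> r \<subseteq> T \<and> even(card T)} = card {T. T \<subseteq> I \<and> r \<subseteq> T \<and> odd(card T)}"
      by (rule card_subsupersets_even_odd[OF assms])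
    then show "card {x \<in> {s. r \<subseteq> s \<and> s \<subseteq> I}. even (card x)} = card {x \<in> {s. r \<subseteq> s \<and> s \<subseteq> I}. odd (card x)}"
      by (simp add: conj_commute conj_left_commute)
  qed
  finally show ?thesis by simp
qed

lemma integrable_ofbool:
  fixes f :: "'a \<Rightarrow> 'c::{banach, second_countable_topology}"
  assumes Rm: "R \<in> measurable M (count_space UNIV)" and f: "integrable M f"
  shows "integrable M (\<lambda>x. of_bool (R x \<in> A) *\<^sub>R f x)"
proof -
  have E: "R -` A \<inter> space M \<in> sets M" using Rm by (rule measurable_sets) simp
  have "integrable M (\<lambda>x. indicator (R -` A \<inter> space M) x *\<^sub>R f x)"
    using E f by (rule integrable_mult_indicator)
  moreover have "integrable M (\<lambda>x. of_bool (R x \<in> A) *\<^sub>R f x) \<longleftrightarrow> integrable M (\<lambda>x. indicator (R -` A \<inter> space M) x *\<^sub>R f x)"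
    by (rule Bochner_Integration.integrable_cong) (auto simp: indicator_def)
  ultimately show ?thesis by simp
qed

theorem proposition2:
  fixes M :: "'a measure"
    and I :: "'i set"
    and N :: "'i \<Rightarrow> 'b measure"
    and Z :: "'a \<Rightarrow> ('i \<Rightarrow> 'b)"
    and R :: "'a \<Rightarrow> 'i set"
    and Q :: "'i set set"
    and c :: real
    and psi :: "('i \<Rightarrow> 'b) \<Rightarrow> real^'d \<Rightarrow> real^'d"
    and \<Omega> :: "(real^'d) set"
    and \<theta> :: "real^'d"
    and F :: "'i set \<Rightarrow> ('i \<Rightarrow> 'b) \<Rightarrow> real^'d"
    and \<alpha> :: "'i set \<Rightarrow> real"
  assumes "prob_space M"
    and "finite I"
    and Z_rv: "Z \<in> measurable M (PiM I N)"
    and R_rv: "R \<in> measurable M (count_space UNIV)"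
    and R_Q: "\<forall>x\<in>space M. R x \<in> Q"
    and "finite Q"
    and Q_sub: "\<forall>r\<in>Q. r \<noteq> {} \<and> r \<subseteq> I"
    and MCAR: "indep_rv M (count_space UNIV) R (PiM I N) Z"
    and "I \<in> Q"
    and "c > 0"
    and "pat_prob M R I > c"
    and "\<theta> \<in> \<Omega>"
    and psi_meas: "(\<lambda>z. psi z \<theta>) \<in> borel_measurable (PiM I N)"
    and psi_mean: "prob_space.expectation M (\<lambda>x. psi (Z x) \<theta>) = 0"
    and psi_sq: "integrable M (\<lambda>x. (psi (Z x) \<theta>) \<bullet> (psi (Z x) \<theta>))"
    and F_meas: "\<forall>r\<in>Q - {I}. F r \<in> borel_measurable (PiM r N)"
    and F_int: "\<forall>r\<in>Q - {I}. integrable M (\<lambda>x. F r (restrict (Z x) r))"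
  shows "integrable M (\<lambda>x. (of_bool (R x = I) / pat_prob M R I) *\<^sub>R psi (Z x) \<theta>
            + (\<Sum>r\<in>Q - {I}. (\<alpha> r * omega M R Q I r x) *\<^sub>R F r (restrict (Z x) r)))
       \<and> prob_space.expectation M (\<lambda>x. (of_bool (R x = I) / pat_prob M R I) *\<^sub>R psi (Z x) \<theta>
            + (\<Sum>r\<in>Q - {I}. (\<alpha> r * omega M R Q I r x) *\<^sub>R F r (restrict (Z x) r))) = 0"
proof -
  interpret prob_space M by fact
  define pI where "pI = pat_prob M R I"
  have pI: "pI > 0" using assms(10,11) by (simp add: pI_def)
  define S where "S r = {s. r \<subseteq> s \<and> s \<subseteq> I}" for r
  have finS: "finite (S r)" for r unfolding S_def by (rule finite_subset[of _ "Pow I"]) (use assms(2) in auto)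
  define cf where "cf r s = \<alpha> r * (-1) ^ (card s - card r) / lam M R Q s" for r s
  define G where "G r z = F r (restrict z r)" for r z
  have prob_lam: "measure M {x\<in>space M. R x \<in> {T. s \<subseteq> T}} = lam M R Q s" for s
  proof -
    have "{x\<in>space M. R x \<in> {T. s \<subseteq> T}} = (\<Union>r\<in>{r\<in>Q. s \<subseteq> r}. {x\<in>space M. R x = r})"
      using R_Q by auto
    moreover have "measure M (\<Union>r\<in>{r\<in>Q. s \<subseteq> r}. {x\<in>space M. R x = r}) = (\<Sum>r\<in>{r\<in>Q. s \<subseteq> r}. measure M {x\<in>space M. R x = r})"
    proof (rule finite_measure_finite_Union)
      show "finite {r \<in> Q. s \<subseteq> r}" using assms(6) by simp
      show "(\<lambda>r. {x \<in> space M. R x = r}) ` {r \<in> Q. s \<subseteq> r} \<subseteq> events"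
      proof (rule image_subsetI)
        fix r
        have "R -` {r} \<inter> space M \<in> events" using R_rv by (rule measurable_sets) simp
        moreover have "{x\<in>space M. R x = r} = R -` {r} \<inter> space M" by auto
        ultimately show "{x\<in>space M. R x = r} \<in> events" by simp
      qed
      show "disjoint_family_on (\<lambda>r. {x \<in> space M. R x = r}) {r \<in> Q. s \<subseteq> r}"
        by (auto simp: disjoint_family_on_def)
    qed
    ultimately show ?thesis by (simp add: lam_def pat_prob_def)
  qed
  have lam_pos: "lam M R Q s > 0" if "s \<subseteq> I" for s
  proof -
    have "pI \<le> lam M R Q s" unfolding lam_def pI_def
      by (rule member_le_sum) (use that assms(6,9) in \<open>auto simp: pat_prob_def\<close>)
    with pI show ?thesis by simp
  qed
  have psi_int: "integrable M (\<lambda>x. psi (Z x) \<theta>)"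
  proof (rule Bochner_Integration.integrable_bound)
    show "integrable M (\<lambda>x. 1 + (psi (Z x) \<theta>) \<bullet> (psi (Z x) \<theta>))"
      by (rule Bochner_Integration.integrable_add[OF finite_measure.integrable_const[OF finite_measure_axioms] psi_sq])
    show "(\<lambda>x. psi (Z x) \<theta>) \<in> borel_measurable M"
      by (rule measurable_compose[OF Z_rv psi_meas])
    show "AE x in M. norm (psi (Z x) \<theta>) \<le> norm (1 + (psi (Z x) \<theta>) \<bullet> (psi (Z x) \<theta>))"
    proof (rule AE_I2)
      fix x
      let ?v = "psi (Z x) \<theta>"
      have h: "0 \<le> (norm ?v - 1)^2" by simp
      have "(norm ?v - 1)^2 = (norm ?v)^2 - 2 * norm ?v + 1" by (simp add: power2_diff)
      with h norm_ge_zero[of ?v] have "norm ?v \<le> 1 + (norm ?v)^2" by linarith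
      then have a: "norm ?v \<le> 1 + ?v \<bullet> ?v" by (simp only: power2_norm_eq_inner)
      have "0 \<le> ?v \<bullet> ?v" by (rule inner_ge_zero)
      then have "norm (1 + ?v \<bullet> ?v) = 1 + ?v \<bullet> ?v" by simp
      with a show "norm ?v \<le> norm (1 + ?v \<bullet> ?v)" by simp
    qed
  qed
  have Gm: "G r \<in> borel_measurable (PiM I N)" if "r \<in> Q - {I}" for r
  proof -
    have "(\<lambda>z. restrict z r) \<in> measurable (PiM I N) (PiM r N)"
      by (rule measurable_restrict_subset) (use Q_sub that in blast)
    moreover have "F r \<in> borel_measurable (PiM r N)" using F_meas that by blast
    ultimately show ?thesis unfolding G_def by (rule measurable_compose)
  qed
  have G_int: "integrable M (\<lambda>x. G r (Z x))" if "r \<in> Q - {I}" for r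
    using F_int that by (simp add: G_def)
  have expand: "(of_bool (R x = I) / pat_prob M R I) *\<^sub>R psi (Z x) \<theta>
            + (\<Sum>r\<in>Q - {I}. (\<alpha> r * omega M R Q I r x) *\<^sub>R F r (restrict (Z x) r))
     = (1 / pI) *\<^sub>R (of_bool (R x \<in> {I}) *\<^sub>R psi (Z x) \<theta>)
       + (\<Sum>r\<in>Q - {I}. \<Sum>s\<in>S r. cf r s *\<^sub>R (of_bool (R x \<in> {T. s \<subseteq> T}) *\<^sub>R G r (Z x)))" for x
  proof -
    have om: "\<alpha> r * omega M R Q I r x = (\<Sum>s\<in>S r. cf r s * of_bool (R x \<in> {T. s \<subseteq> T}))" for r
      unfolding omega_def S_def cf_def sum_distrib_left
      by (rule sum.cong[OF refl]) (simp add: divide_inverse mult_ac)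
    have t: "(\<alpha> r * omega M R Q I r x) *\<^sub>R F r (restrict (Z x) r)
       = (\<Sum>s\<in>S r. cf r s *\<^sub>R (of_bool (R x \<in> {T. s \<subseteq> T}) *\<^sub>R G r (Z x)))" for r
      unfolding om G_def by (simp only: scaleR_sum_left scaleR_scaleR)
    have f: "(of_bool (R x = I) / pat_prob M R I) *\<^sub>R psi (Z x) \<theta>
       = (1 / pI) *\<^sub>R (of_bool (R x \<in> {I}) *\<^sub>R psi (Z x) \<theta>)"
      by (simp add: pI_def)
    show ?thesis by (simp only: t f)
  qed
  define B where "B r s x = of_bool (R x \<in> {T. s \<subseteq> T}) *\<^sub>R G r (Z x)" for r s x
  define E where "E r = (\<integral>x. G r (Z x) \<partial>M)" for r
  have intB: "integrable M (B r s)" if "r \<in> Q - {I}" for r s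
    unfolding B_def by (rule integrable_ofbool[OF R_rv G_int[OF that]])
  have intB2: "integrable M (\<lambda>x. \<Sum>s\<in>S r. cf r s *\<^sub>R B r s x)" if "r \<in> Q - {I}" for r
    by (intro Bochner_Integration.integrable_sum Bochner_Integration.integrable_scaleR_right) (rule intB[OF that])
  have int1: "integrable M (\<lambda>x. (1 / pI) *\<^sub>R (of_bool (R x \<in> {I}) *\<^sub>R psi (Z x) \<theta>))"
    by (intro Bochner_Integration.integrable_scaleR_right) (rule integrable_ofbool[OF R_rv psi_int])
  have int2: "integrable M (\<lambda>x. \<Sum>r\<in>Q - {I}. \<Sum>s\<in>S r. cf r s *\<^sub>R B r s x)"
    by (rule Bochner_Integration.integrable_sum) (rule intB2)
  let ?f = "\<lambda>x. (1 / pI) *\<^sub>R (of_bool (R x \<in> {I}) *\<^sub>R psi (Z x) \<theta>)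
       + (\<Sum>r\<in>Q - {I}. \<Sum>s\<in>S r. cf r s *\<^sub>R B r s x)"
  have int: "integrable M ?f"
    by (rule Bochner_Integration.integrable_add[OF int1 int2])
  have E1: "(\<integral>x. (1 / pI) *\<^sub>R (of_bool (R x \<in> {I}) *\<^sub>R psi (Z x) \<theta>) \<partial>M) = 0"
  proof -
    have "(\<integral>x. (1 / pI) *\<^sub>R (of_bool (R x \<in> {I}) *\<^sub>R psi (Z x) \<theta>) \<partial>M)
        = (1 / pI) *\<^sub>R (\<integral>x. of_bool (R x \<in> {I}) *\<^sub>R psi (Z x) \<theta> \<partial>M)"
      by (rule integral_scaleR_right)
    also have "(\<integral>x. of_bool (R x \<in> {I}) *\<^sub>R psi (Z x) \<theta> \<partial>M)
        = measure M {x\<in>space M. R x \<in> {I}} *\<^sub>R (\<integral>x. psi (Z x) \<theta> \<partial>M)"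
      by (rule indep_int[OF assms(1) Z_rv R_rv MCAR psi_meas])
    also have "(\<integral>x. psi (Z x) \<theta> \<partial>M) = 0" by (rule psi_mean)
    finally show ?thesis by simp
  qed
  have EB: "integral\<^sup>L M (B r s) = lam M R Q s *\<^sub>R E r" if "r \<in> Q - {I}" for r s
  proof -
    have "integral\<^sup>L M (B r s) = measure M {x\<in>space M. R x \<in> {T. s \<subseteq> T}} *\<^sub>R (\<integral>x. G r (Z x) \<partial>M)"
      unfolding B_def by (rule indep_int[OF assms(1) Z_rv R_rv MCAR Gm[OF that]])
    then show ?thesis by (simp only: prob_lam E_def)
  qed
  have E2: "(\<integral>x. (\<Sum>r\<in>Q - {I}. \<Sum>s\<in>S r. cf r s *\<^sub>R B r s x) \<partial>M)
      = (\<Sum>r\<in>Q - {I}. (\<Sum>s\<in>S r. cf r s * lam M R Q s) *\<^sub>R E r)"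
  proof -
    have "(\<integral>x. (\<Sum>r\<in>Q - {I}. \<Sum>s\<in>S r. cf r s *\<^sub>R B r s x) \<partial>M)
       = (\<Sum>r\<in>Q - {I}. (\<integral>x. (\<Sum>s\<in>S r. cf r s *\<^sub>R B r s x) \<partial>M))"
      by (rule Bochner_Integration.integral_sum) (rule intB2)
    also have "\<dots> = (\<Sum>r\<in>Q - {I}. (\<Sum>s\<in>S r. cf r s * lam M R Q s) *\<^sub>R E r)"
    proof (rule sum.cong[OF refl])
      fix r assume r: "r \<in> Q - {I}"
      have "(\<integral>x. (\<Sum>s\<in>S r. cf r s *\<^sub>R B r s x) \<partial>M) = (\<Sum>s\<in>S r. (\<integral>x. cf r s *\<^sub>R B r s x \<partial>M))"
        by (rule Bochner_Integration.integral_sum) (intro Bochner_Integration.integrable_scaleR_right, rule intB[OF r])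
      also have "\<dots> = (\<Sum>s\<in>S r. cf r s *\<^sub>R (lam M R Q s *\<^sub>R E r))"
        by (rule sum.cong[OF refl]) (simp only: integral_scaleR_right EB[OF r])
      also have "\<dots> = (\<Sum>s\<in>S r. cf r s * lam M R Q s) *\<^sub>R E r"
        by (simp only: scaleR_scaleR scaleR_sum_left)
      finally show "(\<integral>x. (\<Sum>s\<in>S r. cf r s *\<^sub>R B r s x) \<partial>M) = (\<Sum>s\<in>S r. cf r s * lam M R Q s) *\<^sub>R E r" .
    qed
    finally show ?thesis .
  qed
  have "integral\<^sup>L M ?f = (\<Sum>r\<in>Q - {I}. (\<Sum>s\<in>S r. cf r s * lam M R Q s) *\<^sub>R E r)"
  proof -
    have "integral\<^sup>L M ?f = (\<integral>x. (1 / pI) *\<^sub>R (of_bool (R x \<in> {I}) *\<^sub>R psi (Z x) \<theta>) \<partial>M)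
       + (\<integral>x. (\<Sum>r\<in>Q - {I}. \<Sum>s\<in>S r. cf r s *\<^sub>R B r s x) \<partial>M)"
      by (rule Bochner_Integration.integral_add[OF int1 int2])
    also have "\<dots> = 0 + (\<Sum>r\<in>Q - {I}. (\<Sum>s\<in>S r. cf r s * lam M R Q s) *\<^sub>R E r)"
      by (simp only: E1 E2)
    finally show ?thesis by (simp only: add_0_left)
  qed
  also have "\<dots> = 0"
  proof (rule sum.neutral, rule ballI)
    fix r assume r: "r \<in> Q - {I}"
    have "(\<Sum>s\<in>S r. cf r s * lam M R Q s) = \<alpha> r * (\<Sum>s\<in>S r. (-1::real) ^ (card s - card r))"
      unfolding sum_distrib_left
    proof (rule sum.cong[OF refl])
      fix s assume "s \<in> S r"
      then have "lam M R Q s > 0" using lam_pos by (auto simp: S_def)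
      then show "cf r s * lam M R Q s = \<alpha> r * (-1) ^ (card s - card r)" by (simp add: cf_def)
    qed
    also have "\<dots> = 0" using alt_sum0[OF assms(2), of r] r Q_sub by (auto simp: S_def)
    finally show "(\<Sum>s\<in>S r. cf r s * lam M R Q s) *\<^sub>R E r = 0" by simp
  qed
  finally have I0: "integral\<^sup>L M ?f = 0" .
  have feq: "(\<lambda>x. (of_bool (R x = I) / pat_prob M R I) *\<^sub>R psi (Z x) \<theta>
            + (\<Sum>r\<in>Q - {I}. (\<alpha> r * omega M R Q I r x) *\<^sub>R F r (restrict (Z x) r))) = ?f"
    by (rule ext) (unfold B_def, rule expand)
  show ?thesis unfolding feq using int I0 by (rule conjI)
qed

end
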